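(* Let $I_\cap^2$ be as defined in the context. Then, for all jointly distributed finite-valued random variables: (GP) $I_\cap^2(\{X_1,X_2\};Y)\geq 0$; (S) $I_\cap^2(\{X_1,X_2\};Y)=I_\cap^2(\{X_2,X_1\};Y)$; (I) $I_\cap^2(\{X_1\};Y)=I(X_1;Y)$; (M) $I_\cap^2(\{X_1,X_2\};Y)\leq I_\cap^2(\{X_1\};Y)$, with equality if $H(X_1|X_2)=0$; (SM) $I_\cap^2(\{X_1,X_2\};Y)\leq I_\cap^2(\{X_1\};Y)$, with equality if $I(X_1X_2;Y)=I(X_2;Y)$. However, $I_\cap^2$ does not satisfy (LP) and (Id): (LP) there exist finite-valued $(X_1,X_2,Y)$ for which the derived synergy $SI^2(\{X_1X_2\};Y):=I(X_1X_2;Y)-I(X_1;Y)-I(X_2;Y)+I_\cap^2(\{X_1,X_2\};Y)$ is negative (so the derived decomposition is not nonnegative); (Id) there exist finite-valued $(X_1,X_2)$ such that $I_\cap^2(\{X_1,X_2\};(X_1,X_2))\neq I(X_1;X_2)$.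
   Context: For finite-valued random variables, $A-B-C$ means that $A$ and $C$ are conditionally independent given $B$. For jointly distributed finite random variables $(X_1,X_2,Y)$ define $$I_\cap^2(\{X_1,X_2\};Y)=\sup_{Q}\, I(Q;Y),$$ over all finite-valued random variables $Q$ jointly distributed with $(X_1,X_2,Y)$ (marginal of $(X_1,X_2,Y)$ fixed) such that $Q-X_1-Y$ and $Q-X_2-Y$ are Markov chains; for a single predictor, $I_\cap^2(\{X_1\};Y)=\sup_Q I(Q;Y)$ over all such $Q$ with $Q-X_1-Y$. $X_1X_2$ denotes the joint random variable $(X_1,X_2)$; $H$ and $I$ denote Shannon entropy and (conditional) mutual information. *)

theory Defs
  imports "HOL-Probability.Probability"
begin

text \<open>Finite-valued jointly distributed random variables are represented by their
joint probability mass function (with finite support). Logarithms are base 2.\<close>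

definition entropy_pmf :: "'u pmf \<Rightarrow> real" where
  "entropy_pmf r = - (\<Sum>x\<in>set_pmf r. pmf r x * log 2 (pmf r x))"

definition cond_entropy_pmf :: "('u \<times> 'v) pmf \<Rightarrow> real" where
  "cond_entropy_pmf r = entropy_pmf r - entropy_pmf (map_pmf snd r)"

definition mi_pmf :: "('u \<times> 'v) pmf \<Rightarrow> real" where
  "mi_pmf r = (\<Sum>z\<in>set_pmf r. pmf r z *
      log 2 (pmf r z / (pmf (map_pmf fst r) (fst z) * pmf (map_pmf snd r) (snd z))))"

text \<open>Markov chain A - B - C for the joint distribution r of (A,B,C):
  A and C conditionally independent given B, i.e. P(a,b,c) P(b) = P(a,b) P(b,c).\<close>
definition markov_pmf :: "('u \<times> 'v \<times> 'w) pmf \<Rightarrow> bool" where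
  "markov_pmf r \<longleftrightarrow> (\<forall>a b c.
      pmf r (a, b, c) * pmf (map_pmf (\<lambda>(a, b, c). b) r) b =
      pmf (map_pmf (\<lambda>(a, b, c). (a, b)) r) (a, b) * pmf (map_pmf (\<lambda>(a, b, c). (b, c)) r) (b, c))"

text \<open>I_cap^2({X1,X2};Y) for the joint distribution p of (X1,X2,Y). The auxiliary
  finite-valued Q takes values in nat (every finite-valued Q can be relabelled into nat).\<close>
definition Icap2 :: "('a \<times> 'b \<times> 'c) pmf \<Rightarrow> real" where
  "Icap2 p = (SUP q \<in> {q :: (nat \<times> 'a \<times> 'b \<times> 'c) pmf.
        finite (set_pmf q) \<and> map_pmf snd q = p \<and>
        markov_pmf (map_pmf (\<lambda>(t, a, b, c). (t, a, c)) q) \<and>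
        markov_pmf (map_pmf (\<lambda>(t, a, b, c). (t, b, c)) q)}.
      mi_pmf (map_pmf (\<lambda>(t, a, b, c). (t, c)) q))"

definition Icap1 :: "('a \<times> 'c) pmf \<Rightarrow> real" where
  "Icap1 p = (SUP q \<in> {q :: (nat \<times> 'a \<times> 'c) pmf.
        finite (set_pmf q) \<and> map_pmf snd q = p \<and> markov_pmf q}.
      mi_pmf (map_pmf (\<lambda>(t, a, c). (t, c)) q))"

definition SI2 :: "('a \<times> 'b \<times> 'c) pmf \<Rightarrow> real" where
  "SI2 p = mi_pmf (map_pmf (\<lambda>(a, b, c). ((a, b), c)) p)
         - mi_pmf (map_pmf (\<lambda>(a, b, c). (a, c)) p)
         - mi_pmf (map_pmf (\<lambda>(a, b, c). (b, c)) p) + Icap2 p"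

end

theory Submission
  imports Defs
begin


definition PP :: "'x pmf \<Rightarrow> ('x \<Rightarrow> 'y) \<Rightarrow> 'x \<Rightarrow> real" where
  "PP M f x = pmf (map_pmf f M) (f x)"

lemma PP_meas: "PP M f x = measure_pmf.prob M {y. f y = f x}"
  unfolding PP_def pmf_map by (simp add: vimage_def)

lemma PP_cong:
  assumes "\<And>y. y \<in> set_pmf M \<Longrightarrow> (f y = f x) = (g y = g x)"
  shows "PP M f x = PP M g x"
proof -
  have "{y. f y = f x} \<inter> set_pmf M = {y. g y = g x} \<inter> set_pmf M" using assms by auto
  then show ?thesis unfolding PP_meas by (metis measure_Int_set_pmf)
qed

lemma PP_pos: "x \<in> set_pmf M \<Longrightarrow> PP M f x > 0"
  unfolding PP_def by (simp add: pmf_positive)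

lemma PP_ge: "pmf M x \<le> PP M f x"
  unfolding PP_meas measure_pmf_single[symmetric]
  by (rule measure_pmf.finite_measure_mono) auto

lemma PP_map: "PP (map_pmf g M) f (g x) = PP M (\<lambda>y. f (g y)) x"
  unfolding PP_def map_pmf_comp by simp

lemma PP_id: "PP M (\<lambda>y. y) x = pmf M x"
  by (simp add: PP_def map_pmf_ident)

lemma sum_pull:
  assumes "finite (set_pmf M)"
  shows "(\<Sum>z\<in>set_pmf (map_pmf g M). pmf (map_pmf g M) z * h z) = (\<Sum>x\<in>set_pmf M. pmf M x * h (g x))"
proof -
  have "(\<Sum>z\<in>set_pmf (map_pmf g M). pmf (map_pmf g M) z * h z) = integral\<^sup>L (map_pmf g M) h"
    using assms by (subst integral_measure_pmf_real[where A="set_pmf (map_pmf g M)"]) (auto simp: mult.commute)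
  also have "\<dots> = integral\<^sup>L M (\<lambda>x. h (g x))" by simp
  also have "\<dots> = (\<Sum>x\<in>set_pmf M. pmf M x * h (g x))"
    using assms by (subst integral_measure_pmf_real[where A="set_pmf M"]) (auto simp: mult.commute)
  finally show ?thesis .
qed

lemma mi_pull:
  assumes "finite (set_pmf M)"
  shows "mi_pmf (map_pmf g M) = (\<Sum>x\<in>set_pmf M. pmf M x *
     log 2 (PP M g x / (PP M (\<lambda>y. fst (g y)) x * PP M (\<lambda>y. snd (g y)) x)))"
  unfolding mi_pmf_def using assms by (subst sum_pull) (auto simp: PP_def map_pmf_comp)

lemma mi_self: "mi_pmf r = mi_pmf (map_pmf (\<lambda>y. y) r)"
  by (simp add: map_pmf_ident)

lemma ent_pull:
  assumes "finite (set_pmf M)"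
  shows "entropy_pmf (map_pmf g M) = - (\<Sum>x\<in>set_pmf M. pmf M x * log 2 (PP M g x))"
  unfolding entropy_pmf_def using assms by (subst sum_pull) (auto simp: PP_def)

lemma markov_alt:
  "markov_pmf r \<longleftrightarrow> (\<forall>a b c. pmf r (a,b,c) * pmf (map_pmf (\<lambda>z. fst (snd z)) r) b =
      pmf (map_pmf (\<lambda>z. (fst z, fst (snd z))) r) (a,b) * pmf (map_pmf snd r) (b,c))"
proof -
  have e1: "(\<lambda>(a::'a, b::'b, c::'c). b) = (\<lambda>z. fst (snd z))" by auto
  have e2: "(\<lambda>(a::'a, b::'b, c::'c). (a,b)) = (\<lambda>z. (fst z, fst (snd z)))" by auto
  have e3: "(\<lambda>(a::'a, b::'b, c::'c). (b,c)) = snd" by auto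
  show ?thesis unfolding markov_pmf_def e1 e2 e3 ..
qed

lemma marg_fst:
  assumes "finite X" "fst ` set_pmf r \<subseteq> X"
  shows "(\<Sum>x\<in>X. pmf r (x,y)) = pmf (map_pmf snd r) y"
proof -
  have "pmf (map_pmf snd r) y = measure r (snd -` {y})" by (rule pmf_map)
  also have "\<dots> = measure r ((snd -` {y}) \<inter> set_pmf r)" by (simp add: measure_Int_set_pmf)
  also have "(snd -` {y}) \<inter> set_pmf r = (X \<times> {y}) \<inter> set_pmf r" using assms(2) by force
  also have "measure r \<dots> = measure r (X \<times> {y})" by (simp add: measure_Int_set_pmf)
  also have "\<dots> = sum (pmf r) (X \<times> {y})" using assms(1) by (simp add: measure_measure_pmf_finite)
  also have "X \<times> {y} = (\<lambda>x. (x,y)) ` X" by auto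
  also have "sum (pmf r) \<dots> = (\<Sum>x\<in>X. pmf r (x,y))" by (subst sum.reindex) (auto simp: inj_on_def)
  finally show ?thesis ..
qed

lemma marg_snd:
  assumes "finite X" "snd ` set_pmf r \<subseteq> X"
  shows "(\<Sum>x\<in>X. pmf r (y,x)) = pmf (map_pmf fst r) y"
proof -
  have "pmf (map_pmf fst r) y = measure r (fst -` {y})" by (rule pmf_map)
  also have "\<dots> = measure r ((fst -` {y}) \<inter> set_pmf r)" by (simp add: measure_Int_set_pmf)
  also have "(fst -` {y}) \<inter> set_pmf r = ({y} \<times> X) \<inter> set_pmf r" using assms(2) by force
  also have "measure r \<dots> = measure r ({y} \<times> X)" by (simp add: measure_Int_set_pmf)
  also have "\<dots> = sum (pmf r) ({y} \<times> X)" using assms(1) by (simp add: measure_measure_pmf_finite)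
  also have "{y} \<times> X = (\<lambda>x. (y,x)) ` X" by auto
  also have "sum (pmf r) \<dots> = (\<Sum>x\<in>X. pmf r (y,x))" by (subst sum.reindex) (auto simp: inj_on_def)
  finally show ?thesis ..
qed



definition Gc :: "('u \<times> 'v \<times> 'w) pmf \<Rightarrow> real" where
 "Gc r = (\<Sum>z\<in>set_pmf r. pmf r z * log 2 (pmf r z * PP r (\<lambda>z. fst (snd z)) z /
      (PP r (\<lambda>z. (fst z, fst (snd z))) z * PP r snd z)))"

lemma G_main:
  fixes r :: "('u \<times> 'v \<times> 'w) pmf"
  assumes fin: "finite (set_pmf r)"
  shows G1: "Gc r \<ge> 0" and G2: "Gc r = 0 \<Longrightarrow> markov_pmf r"
proof -
  define S where "S = set_pmf r"
  define A where "A = fst ` S"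
  define B where "B = (\<lambda>z. fst (snd z)) ` S"
  define C where "C = (\<lambda>z. snd (snd z)) ` S"
  define pv where "pv b = pmf (map_pmf (\<lambda>z. fst (snd z)) r) b" for b
  define pab where "pab x = pmf (map_pmf (\<lambda>z. (fst z, fst (snd z))) r) x" for x
  define pbc where "pbc x = pmf (map_pmf snd r) x" for x
  define s where "s z = pab (fst z, fst (snd z)) * pbc (snd z) / pv (fst (snd z))" for z
  have finS: "finite S" using fin S_def by simp
  have finA: "finite A" "finite B" "finite C" using finS A_def B_def C_def by auto
  have pvpos: "b \<in> B \<Longrightarrow> pv b > 0" for b unfolding pv_def B_def S_def by (simp add: pmf_positive)
  have s_nonneg: "s z \<ge> 0" for z unfolding s_def pab_def pbc_def pv_def by simp
  have sub: "S \<subseteq> A \<times> B \<times> C" unfolding A_def B_def C_def by force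
  have finT: "finite (A \<times> B \<times> C)" using finA by simp
  have sumT: "(\<Sum>z\<in>A \<times> B \<times> C. s z) = 1"
  proof -
    have "(\<Sum>z\<in>A \<times> B \<times> C. s z) = (\<Sum>a\<in>A. \<Sum>bc\<in>B \<times> C. s (a, bc))"
      by (simp add: sum.cartesian_product)
    also have "\<dots> = (\<Sum>a\<in>A. \<Sum>b\<in>B. \<Sum>c\<in>C. s (a, b, c))"
      by (simp add: sum.cartesian_product case_prod_beta')
    also have "\<dots> = (\<Sum>b\<in>B. \<Sum>a\<in>A. \<Sum>c\<in>C. s (a, b, c))" by (rule sum.swap)
    also have "\<dots> = (\<Sum>b\<in>B. pv b)"
    proof (rule sum.cong[OF refl])
      fix b assume b: "b \<in> B"
      have "(\<Sum>a\<in>A. \<Sum>c\<in>C. s (a, b, c)) = (\<Sum>a\<in>A. pab (a,b)) * (\<Sum>c\<in>C. pbc (b,c)) / pv b"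
        unfolding s_def by (simp add: sum_product sum_divide_distrib)
      also have "(\<Sum>a\<in>A. pab (a,b)) = pv b"
        unfolding pab_def pv_def using finA
        by (subst marg_fst) (force simp: A_def S_def map_pmf_comp)+
      also have "(\<Sum>c\<in>C. pbc (b,c)) = pv b"
        unfolding pbc_def pv_def using finA
        by (subst marg_snd) (force simp: C_def S_def map_pmf_comp image_image)+
      finally show "(\<Sum>a\<in>A. \<Sum>c\<in>C. s (a, b, c)) = pv b" using pvpos[OF b] by simp
    qed
    also have "\<dots> = 1" unfolding pv_def using finA by (intro sum_pmf_eq_1) (auto simp: B_def S_def)
    finally show ?thesis .
  qed
  have sumS: "(\<Sum>z\<in>S. s z) \<le> 1"
    using sum_mono2[OF finT sub, of s] s_nonneg sumT by simp
  have rpos: "z \<in> S \<Longrightarrow> pmf r z > 0" for z unfolding S_def by (simp add: pmf_positive)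
  have spos: "z \<in> S \<Longrightarrow> s z > 0" for z
    unfolding s_def pab_def pbc_def pv_def S_def by (intro divide_pos_pos mult_pos_pos) (auto simp: pmf_positive)
  have Gc_eq: "Gc r = (\<Sum>z\<in>S. pmf r z * ln (pmf r z / s z)) / ln 2"
    unfolding Gc_def S_def[symmetric] sum_divide_distrib
  proof (rule sum.cong[OF refl])
    fix z assume z: "z \<in> S"
    have "pmf r z * PP r (\<lambda>z. fst (snd z)) z / (PP r (\<lambda>z. (fst z, fst (snd z))) z * PP r snd z)
          = pmf r z / s z"
      using pvpos[of "fst (snd z)"] z unfolding s_def PP_def pab_def pbc_def pv_def B_def
      by (simp add: field_simps)
    then show "pmf r z * log 2 (pmf r z * PP r (\<lambda>z. fst (snd z)) z / (PP r (\<lambda>z. (fst z, fst (snd z))) z * PP r snd z))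
       = pmf r z * ln (pmf r z / s z) / ln 2" by (simp add: log_def)
  qed
  define d where "d z = pmf r z * ln (pmf r z / s z) - (pmf r z - s z)" for z
  have d_nonneg: "z \<in> S \<Longrightarrow> d z \<ge> 0" for z
  proof -
    assume z: "z \<in> S"
    have "ln (s z / pmf r z) \<le> s z / pmf r z - 1" using rpos[OF z] spos[OF z] by (intro ln_le_minus_one) simp
    moreover have "ln (pmf r z / s z) = - ln (s z / pmf r z)" using rpos[OF z] spos[OF z] by (simp add: ln_div)
    ultimately have "pmf r z * ln (pmf r z / s z) \<ge> pmf r z * (1 - s z / pmf r z)"
      using rpos[OF z] by (intro mult_left_mono) auto
    moreover have "pmf r z * (1 - s z / pmf r z) = pmf r z - s z" using rpos[OF z] by (simp add: field_simps)
    ultimately show ?thesis unfolding d_def by linarith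
  qed
  have sumr: "(\<Sum>z\<in>S. pmf r z) = 1" using finS S_def by (intro sum_pmf_eq_1) auto
  have main: "Gc r * ln 2 = (\<Sum>z\<in>S. d z) + (1 - (\<Sum>z\<in>S. s z))"
    unfolding Gc_eq d_def sum_subtractf sumr by simp
  have dsum: "(\<Sum>z\<in>S. d z) \<ge> 0" using d_nonneg by (intro sum_nonneg) auto
  show "Gc r \<ge> 0"
  proof -
    have "Gc r * ln 2 \<ge> 0" using main dsum sumS by simp
    then show ?thesis by (simp add: zero_le_mult_iff)
  qed
  assume G0: "Gc r = 0"
  have "(\<Sum>z\<in>S. d z) = 0" and sS1: "(\<Sum>z\<in>S. s z) = 1" using main G0 dsum sumS by auto
  then have d0: "z \<in> S \<Longrightarrow> d z = 0" for z using d_nonneg finS sum_nonneg_eq_0_iff by blast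
  have rs: "z \<in> S \<Longrightarrow> pmf r z = s z" for z
  proof -
    assume z: "z \<in> S"
    have "ln (s z / pmf r z) = s z / pmf r z - 1"
      using d0[OF z] rpos[OF z] spos[OF z] unfolding d_def by (simp add: ln_div field_simps)
    then have "s z / pmf r z = 1" using rpos[OF z] spos[OF z] by (intro ln_eq_minus_one) auto
    then show ?thesis using rpos[OF z] by simp
  qed
  show "markov_pmf r" unfolding markov_alt
  proof (intro allI)
    fix a b c
    show "pmf r (a, b, c) * pmf (map_pmf (\<lambda>z. fst (snd z)) r) b =
       pmf (map_pmf (\<lambda>z. (fst z, fst (snd z))) r) (a, b) * pmf (map_pmf snd r) (b, c)"
    proof (cases "(a,b,c) \<in> S")
      case True
      then have "b \<in> B" unfolding B_def by force
      then show ?thesis using rs[OF True] pvpos[of b] unfolding s_def pv_def pab_def pbc_def by simp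
    next
      case False
      then have r0: "pmf r (a,b,c) = 0" unfolding S_def by (simp add: set_pmf_eq)
      show ?thesis
      proof (rule ccontr)
        assume "\<not> ?thesis"
        then have "pab (a,b) \<noteq> 0" "pbc (b,c) \<noteq> 0" using r0 unfolding pab_def pbc_def by auto
        then have ab: "(a,b) \<in> (\<lambda>z. (fst z, fst (snd z))) ` S" and bc: "(b,c) \<in> snd ` S"
          unfolding pab_def pbc_def S_def by (metis set_map_pmf set_pmf_iff)+
        have abc: "(a,b,c) \<in> A \<times> B \<times> C" using ab bc unfolding A_def B_def C_def by force
        have "b \<in> B" using abc by auto
        have "s (a,b,c) > 0" using \<open>pab (a,b) \<noteq> 0\<close> \<open>pbc (b,c) \<noteq> 0\<close> pvpos[OF \<open>b \<in> B\<close>]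
          unfolding s_def pab_def pbc_def by (simp add: order.strict_iff_order)
        have "(\<Sum>z\<in>insert (a,b,c) S. s z) \<le> (\<Sum>z\<in>A \<times> B \<times> C. s z)"
          using abc sub finT s_nonneg by (intro sum_mono2) auto
        moreover have "(\<Sum>z\<in>insert (a,b,c) S. s z) = s (a,b,c) + (\<Sum>z\<in>S. s z)"
          using False finS by simp
        ultimately show False using sumT sS1 \<open>s (a,b,c) > 0\<close> by simp
      qed
    qed
  qed
qed



lemma pmf_map_PP: "pmf (map_pmf g M) (g x) = PP M g x" by (simp add: PP_def)

lemma Gg_eq:
  assumes "finite (set_pmf M)"
  shows "Gc (map_pmf (\<lambda>x. (u x, v x, w x)) M) = (\<Sum>x\<in>set_pmf M. pmf M x *
     log 2 (PP M (\<lambda>x. (u x, v x, w x)) x * PP M v x / (PP M (\<lambda>x. (u x, v x)) x * PP M (\<lambda>x. (v x, w x)) x)))"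
  unfolding Gc_def using assms
  by (subst sum_pull) (simp_all add: PP_map[of "\<lambda>x. (u x, v x, w x)"] pmf_map_PP[of "\<lambda>x. (u x, v x, w x)"])

lemma DPI:
  assumes fin: "finite (set_pmf M)" and mk: "markov_pmf (map_pmf (\<lambda>x. (t x, a x, c x)) M)"
  shows "mi_pmf (map_pmf (\<lambda>x. (t x, c x)) M) \<le> mi_pmf (map_pmf (\<lambda>x. (a x, c x)) M)"
proof -
  define Ptac where "Ptac = PP M (\<lambda>x. (t x, a x, c x))"
  define Pta where "Pta = PP M (\<lambda>x. (t x, a x))"
  define Pac where "Pac = PP M (\<lambda>x. (a x, c x))"
  define Ptc where "Ptc = PP M (\<lambda>x. (t x, c x))"
  define Pa where "Pa = PP M a"
  define Pt where "Pt = PP M t"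
  define Pc where "Pc = PP M c"
  have pos: "x \<in> set_pmf M \<Longrightarrow> Ptac x > 0 \<and> Pta x > 0 \<and> Pac x > 0 \<and> Ptc x > 0 \<and> Pa x > 0 \<and> Pt x > 0 \<and> Pc x > 0" for x
    unfolding Ptac_def Pta_def Pac_def Ptc_def Pa_def Pt_def Pc_def by (simp add: PP_pos)
  have mkx: "Ptac x * Pa x = Pta x * Pac x" for x
  proof -
    have "pmf (map_pmf (\<lambda>x. (t x, a x, c x)) M) (t x, a x, c x) *
          pmf (map_pmf (\<lambda>z. fst (snd z)) (map_pmf (\<lambda>x. (t x, a x, c x)) M)) (a x) =
          pmf (map_pmf (\<lambda>z. (fst z, fst (snd z))) (map_pmf (\<lambda>x. (t x, a x, c x)) M)) (t x, a x) *
          pmf (map_pmf snd (map_pmf (\<lambda>x. (t x, a x, c x)) M)) (a x, c x)"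
      using mk unfolding markov_alt by blast
    then show ?thesis unfolding Ptac_def Pta_def Pac_def Pa_def PP_def map_pmf_comp by simp
  qed
  have G: "Gc (map_pmf (\<lambda>x. (a x, t x, c x)) M) = (\<Sum>x\<in>set_pmf M. pmf M x * log 2 (Ptac x * Pt x / (Pta x * Ptc x)))"
  proof -
    have "PP M (\<lambda>x. (a x, t x, c x)) x = Ptac x" for x unfolding Ptac_def by (rule PP_cong) auto
    moreover have "PP M (\<lambda>x. (a x, t x)) x = Pta x" for x unfolding Pta_def by (rule PP_cong) auto
    ultimately show ?thesis unfolding Gg_eq[OF fin] Pt_def Ptc_def by simp
  qed
  have "mi_pmf (map_pmf (\<lambda>x. (a x, c x)) M) - mi_pmf (map_pmf (\<lambda>x. (t x, c x)) M) =
        (\<Sum>x\<in>set_pmf M. pmf M x * log 2 (Ptac x * Pt x / (Pta x * Ptc x)))"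
    unfolding mi_pull[OF fin] sum_subtractf[symmetric]
  proof (rule sum.cong[OF refl])
    fix x assume x: "x \<in> set_pmf M"
    note p = pos[OF x]
    have "log 2 (Pac x / (Pa x * Pc x)) - log 2 (Ptc x / (Pt x * Pc x)) =
          log 2 ((Pac x / (Pa x * Pc x)) / (Ptc x / (Pt x * Pc x)))"
      using p by (subst log_divide) auto
    also have "(Pac x / (Pa x * Pc x)) / (Ptc x / (Pt x * Pc x)) = Ptac x * Pt x / (Pta x * Ptc x)"
    proof -
      have "Pac x = Ptac x * Pa x / Pta x" using mkx[of x] p by (simp add: field_simps)
      then show ?thesis using p by (simp add: field_simps)
    qed
    finally show "pmf M x * log 2 (PP M (\<lambda>x. (a x, c x)) x / (PP M (\<lambda>y. fst (a y, c y)) x * PP M (\<lambda>y. snd (a y, c y)) x)) -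
         pmf M x * log 2 (PP M (\<lambda>x. (t x, c x)) x / (PP M (\<lambda>y. fst (t y, c y)) x * PP M (\<lambda>y. snd (t y, c y)) x)) =
         pmf M x * log 2 (Ptac x * Pt x / (Pta x * Ptc x))"
      unfolding Pac_def Pa_def Pc_def Ptc_def Pt_def by (simp add: right_diff_distrib[symmetric])
  qed
  with G G1[of "map_pmf (\<lambda>x. (a x, t x, c x)) M"] fin show ?thesis by simp
qed



lemma meas_eq_set:
  assumes "A \<inter> set_pmf M = B \<inter> set_pmf M"
  shows "measure_pmf.prob M A = measure_pmf.prob M B"
  by (metis assms measure_Int_set_pmf)

lemma markov_det: "markov_pmf (map_pmf (\<lambda>x. (g (h x), h x, k x)) M)"
  unfolding markov_alt
proof (intro allI)
  fix t b c
  let ?R = "map_pmf (\<lambda>x. (g (h x), h x, k x)) M"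
  have e1: "pmf ?R (t,b,c) = measure_pmf.prob M {x. g (h x) = t \<and> h x = b \<and> k x = c}"
    by (simp add: pmf_map vimage_def)
  have e2: "pmf (map_pmf (\<lambda>z. fst (snd z)) ?R) b = measure_pmf.prob M {x. h x = b}"
    by (simp add: pmf_map vimage_def map_pmf_comp)
  have e3: "pmf (map_pmf (\<lambda>z. (fst z, fst (snd z))) ?R) (t,b) = measure_pmf.prob M {x. g (h x) = t \<and> h x = b}"
    by (simp add: pmf_map vimage_def map_pmf_comp)
  have e4: "pmf (map_pmf snd ?R) (b,c) = measure_pmf.prob M {x. h x = b \<and> k x = c}"
    by (simp add: pmf_map vimage_def map_pmf_comp)
  show "pmf ?R (t, b, c) * pmf (map_pmf (\<lambda>z. fst (snd z)) ?R) b =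
        pmf (map_pmf (\<lambda>z. (fst z, fst (snd z))) ?R) (t, b) * pmf (map_pmf snd ?R) (b, c)"
  proof (cases "t = g b")
    case True
    have s1: "{x. g (h x) = t \<and> h x = b \<and> k x = c} = {x. h x = b \<and> k x = c}" using True by auto
    have s2: "{x. g (h x) = t \<and> h x = b} = {x. h x = b}" using True by auto
    show ?thesis unfolding e1 e2 e3 e4 s1 s2 by simp
  next
    case False
    have s1: "{x. g (h x) = t \<and> h x = b \<and> k x = c} = {}" using False by auto
    have s2: "{x. g (h x) = t \<and> h x = b} = {}" using False by auto
    show ?thesis unfolding e1 e2 e3 e4 s1 s2 by simp
  qed
qed

lemma markov_push:
  fixes p :: "('a \<times> 'b \<times> 'c) pmf"
  assumes mk: "markov_pmf p" and inj: "inj_on e (fst ` set_pmf p)"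
  shows "markov_pmf (map_pmf (\<lambda>(a, b, c). (e a, b, c)) p)"
  unfolding markov_alt
proof (intro allI)
  fix t b c
  let ?R = "map_pmf (\<lambda>(a, b, c). (e a, b, c)) p"
  have e1: "pmf ?R (t,b,c) = measure_pmf.prob p {x. e (fst x) = t \<and> snd x = (b, c)}"
    by (simp add: pmf_map vimage_def split_beta)
  have e2: "pmf (map_pmf (\<lambda>z. fst (snd z)) ?R) b = pmf (map_pmf (\<lambda>z. fst (snd z)) p) b"
    by (simp add: map_pmf_comp split_beta)
  have e3: "pmf (map_pmf (\<lambda>z. (fst z, fst (snd z))) ?R) (t,b) = measure_pmf.prob p {x. e (fst x) = t \<and> fst (snd x) = b}"
    by (simp add: pmf_map vimage_def map_pmf_comp split_beta)
  have e4: "pmf (map_pmf snd ?R) (b,c) = pmf (map_pmf snd p) (b,c)"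
    by (simp add: map_pmf_comp split_beta)
  show "pmf ?R (t, b, c) * pmf (map_pmf (\<lambda>z. fst (snd z)) ?R) b =
        pmf (map_pmf (\<lambda>z. (fst z, fst (snd z))) ?R) (t, b) * pmf (map_pmf snd ?R) (b, c)"
  proof (cases "\<exists>a\<in>fst ` set_pmf p. e a = t")
    case True
    then obtain a where a: "a \<in> fst ` set_pmf p" "e a = t" by blast
    have "measure_pmf.prob p {x. e (fst x) = t \<and> snd x = (b, c)} = measure_pmf.prob p {(a,b,c)}"
      using a inj by (intro meas_eq_set) (auto simp: inj_on_def)
    moreover have "measure_pmf.prob p {x. e (fst x) = t \<and> fst (snd x) = b} = measure_pmf.prob p {x. (fst x, fst (snd x)) = (a, b)}"
      using a inj by (intro meas_eq_set) (auto simp: inj_on_def)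
    moreover have "pmf p (a,b,c) * pmf (map_pmf (\<lambda>z. fst (snd z)) p) b =
        pmf (map_pmf (\<lambda>z. (fst z, fst (snd z))) p) (a, b) * pmf (map_pmf snd p) (b, c)"
      using mk unfolding markov_alt by blast
    ultimately show ?thesis unfolding e1 e2 e3 e4 by (simp add: measure_pmf_single pmf_map vimage_def)
  next
    case False
    have "measure_pmf.prob p {x. e (fst x) = t \<and> snd x = (b, c)} = measure_pmf.prob p {}"
      using False by (intro meas_eq_set) force
    moreover have "measure_pmf.prob p {x. e (fst x) = t \<and> fst (snd x) = b} = measure_pmf.prob p {}"
      using False by (intro meas_eq_set) force
    ultimately show ?thesis unfolding e1 e2 e3 e4 by simp
  qed
qed

lemma mi_relabel:
  assumes fin: "finite (set_pmf M)" and inj: "inj_on e (u ` set_pmf M)"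
  shows "mi_pmf (map_pmf (\<lambda>x. (e (u x), w x)) M) = mi_pmf (map_pmf (\<lambda>x. (u x, w x)) M)"
  unfolding mi_pull[OF fin]
proof (rule sum.cong[OF refl])
  fix x assume x: "x \<in> set_pmf M"
  have "PP M (\<lambda>x. (e (u x), w x)) x = PP M (\<lambda>x. (u x, w x)) x"
    using x inj by (intro PP_cong) (auto simp: inj_on_def)
  moreover have "PP M (\<lambda>y. e (u y)) x = PP M u x"
    using x inj by (intro PP_cong) (auto simp: inj_on_def)
  ultimately show "pmf M x * log 2 (PP M (\<lambda>x. (e (u x), w x)) x / (PP M (\<lambda>y. fst (e (u y), w y)) x * PP M (\<lambda>y. snd (e (u y), w y)) x)) =
         pmf M x * log 2 (PP M (\<lambda>x. (u x, w x)) x / (PP M (\<lambda>y. fst (u y, w y)) x * PP M (\<lambda>y. snd (u y, w y)) x))"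
    by simp
qed

lemma mi_triv:
  assumes fin: "finite (set_pmf M)"
  shows "mi_pmf (map_pmf (\<lambda>x. (k, w x)) M) = 0"
  unfolding mi_pull[OF fin]
proof (rule sum.neutral, intro ballI)
  fix x assume x: "x \<in> set_pmf M"
  have "PP M (\<lambda>x. (k, w x)) x = PP M w x" by (intro PP_cong) auto
  moreover have "PP M (\<lambda>y. k) x = 1" unfolding PP_meas by simp
  moreover have "PP M w x > 0" using x by (rule PP_pos)
  ultimately show "pmf M x * log 2 (PP M (\<lambda>x. (k, w x)) x / (PP M (\<lambda>y. fst (k, w y)) x * PP M (\<lambda>y. snd (k, w y)) x)) = 0"
    by simp
qed



lemma markov_from_mi:
  fixes p :: "('a \<times> 'b \<times> 'c) pmf"
  assumes fin: "finite (set_pmf p)"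
    and eq: "mi_pmf (map_pmf (\<lambda>(a, b, c). ((a, b), c)) p) = mi_pmf (map_pmf (\<lambda>(a, b, c). (b, c)) p)"
  shows "markov_pmf p"
proof -
  have "mi_pmf (map_pmf (\<lambda>(a, b, c). ((a, b), c)) p) - mi_pmf (map_pmf (\<lambda>(a, b, c). (b, c)) p) = Gc p"
    unfolding mi_pull[OF fin] sum_subtractf[symmetric] Gc_def
  proof (rule sum.cong[OF refl])
    fix x assume x: "x \<in> set_pmf p"
    have q1: "PP p (\<lambda>(a, b, c). ((a, b), c)) x = pmf p x"
      by (subst PP_id[symmetric], rule PP_cong) (auto simp: split_beta)
    have q2: "PP p (\<lambda>y. fst (case y of (a, b, c) \<Rightarrow> ((a, b), c))) x = PP p (\<lambda>z. (fst z, fst (snd z))) x"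
      by (rule PP_cong) (auto simp: split_beta)
    have q3: "PP p (\<lambda>y. snd (case y of (a, b, c) \<Rightarrow> ((a, b), c))) x = PP p (\<lambda>z. snd (snd z)) x"
      by (rule PP_cong) (auto simp: split_beta)
    have q4: "PP p (\<lambda>(a, b, c). (b, c)) x = PP p snd x"
      by (rule PP_cong) (auto simp: split_beta)
    have q5: "PP p (\<lambda>y. fst (case y of (a, b, c) \<Rightarrow> (b, c))) x = PP p (\<lambda>z. fst (snd z)) x"
      by (rule PP_cong) (auto simp: split_beta)
    have q6: "PP p (\<lambda>y. snd (case y of (a, b, c) \<Rightarrow> (b, c))) x = PP p (\<lambda>z. snd (snd z)) x"
      by (rule PP_cong) (auto simp: split_beta)
    have pos: "pmf p x > 0" "PP p (\<lambda>z. (fst z, fst (snd z))) x > 0" "PP p (\<lambda>z. snd (snd z)) x > 0"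
      "PP p snd x > 0" "PP p (\<lambda>z. fst (snd z)) x > 0" using x by (auto simp: PP_pos pmf_positive)
    have "log 2 (pmf p x / (PP p (\<lambda>z. (fst z, fst (snd z))) x * PP p (\<lambda>z. snd (snd z)) x)) -
          log 2 (PP p snd x / (PP p (\<lambda>z. fst (snd z)) x * PP p (\<lambda>z. snd (snd z)) x)) =
          log 2 ((pmf p x / (PP p (\<lambda>z. (fst z, fst (snd z))) x * PP p (\<lambda>z. snd (snd z)) x)) /
                 (PP p snd x / (PP p (\<lambda>z. fst (snd z)) x * PP p (\<lambda>z. snd (snd z)) x)))"
      using pos by (subst log_divide) auto
    also have "\<dots> = log 2 (pmf p x * PP p (\<lambda>z. fst (snd z)) x / (PP p (\<lambda>z. (fst z, fst (snd z))) x * PP p snd x))"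
      using pos by (simp add: field_simps)
    finally show "pmf p x * log 2 (PP p (\<lambda>(a, b, c). ((a, b), c)) x /
          (PP p (\<lambda>y. fst (case y of (a, b, c) \<Rightarrow> ((a, b), c))) x * PP p (\<lambda>y. snd (case y of (a, b, c) \<Rightarrow> ((a, b), c))) x)) -
        pmf p x * log 2 (PP p (\<lambda>(a, b, c). (b, c)) x /
          (PP p (\<lambda>y. fst (case y of (a, b, c) \<Rightarrow> (b, c))) x * PP p (\<lambda>y. snd (case y of (a, b, c) \<Rightarrow> (b, c))) x)) =
        pmf p x * log 2 (pmf p x * PP p (\<lambda>z. fst (snd z)) x / (PP p (\<lambda>z. (fst z, fst (snd z))) x * PP p snd x))"
      unfolding q1 q2 q3 q4 q5 q6 by (simp add: right_diff_distrib[symmetric])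
  qed
  with eq have "Gc p = 0" by simp
  then show ?thesis using G2[OF fin] by blast
qed



lemma markov_from_H:
  fixes p :: "('a \<times> 'b \<times> 'c) pmf"
  assumes fin: "finite (set_pmf p)"
    and H0: "cond_entropy_pmf (map_pmf (\<lambda>(a, b, c). (a, b)) p) = 0"
  shows "markov_pmf p"
proof -
  define Pab where "Pab x = PP p (\<lambda>z. (fst z, fst (snd z))) x" for x
  define Pb where "Pb x = PP p (\<lambda>z. fst (snd z)) x" for x
  have le: "Pab x \<le> Pb x" for x
    unfolding Pab_def Pb_def PP_meas by (rule measure_pmf.finite_measure_mono) auto
  have pos: "x \<in> set_pmf p \<Longrightarrow> Pab x > 0" for x unfolding Pab_def by (rule PP_pos)
  have "cond_entropy_pmf (map_pmf (\<lambda>(a, b, c). (a, b)) p) = (\<Sum>x\<in>set_pmf p. pmf p x * (log 2 (Pb x) - log 2 (Pab x)))"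
  proof -
    have f1: "(\<lambda>(a::'a, b::'b, c::'c). (a, b)) = (\<lambda>z. (fst z, fst (snd z)))" by auto
    have "cond_entropy_pmf (map_pmf (\<lambda>(a, b, c). (a, b)) p) =
       - (\<Sum>x\<in>set_pmf p. pmf p x * log 2 (Pab x)) + (\<Sum>x\<in>set_pmf p. pmf p x * log 2 (Pb x))"
      unfolding cond_entropy_pmf_def map_pmf_comp f1 ent_pull[OF fin] Pab_def Pb_def by simp
    then show ?thesis by (simp add: sum_subtractf right_diff_distrib)
  qed
  with H0 have s0: "(\<Sum>x\<in>set_pmf p. pmf p x * (log 2 (Pb x) - log 2 (Pab x))) = 0" by simp
  have nn: "x \<in> set_pmf p \<Longrightarrow> pmf p x * (log 2 (Pb x) - log 2 (Pab x)) \<ge> 0" for x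
    using le[of x] pos[of x] by (intro mult_nonneg_nonneg) auto
  have eqP: "x \<in> set_pmf p \<Longrightarrow> Pab x = Pb x" for x
  proof -
    assume x: "x \<in> set_pmf p"
    have "\<forall>x\<in>set_pmf p. pmf p x * (log 2 (Pb x) - log 2 (Pab x)) = 0"
      using s0 nn sum_nonneg_eq_0_iff[OF fin, of "\<lambda>x. pmf p x * (log 2 (Pb x) - log 2 (Pab x))"] by blast
    then have "pmf p x * (log 2 (Pb x) - log 2 (Pab x)) = 0" using x by blast
    then have "log 2 (Pb x) = log 2 (Pab x)" using x by (simp add: pmf_positive[THEN less_imp_neq, symmetric])
    moreover have "Pab x < Pb x \<Longrightarrow> log 2 (Pab x) < log 2 (Pb x)" using pos[OF x] by simp
    ultimately show ?thesis using le[of x] by fastforce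
  qed
  show ?thesis unfolding markov_alt
  proof (intro allI)
    fix a b c
    have e1: "pmf p (a,b,c) = measure_pmf.prob p {(a,b,c)}" by (simp add: measure_pmf_single)
    have e2: "pmf (map_pmf (\<lambda>z. fst (snd z)) p) b = measure_pmf.prob p {y. fst (snd y) = b}"
      by (simp add: pmf_map vimage_def)
    have e3: "pmf (map_pmf (\<lambda>z. (fst z, fst (snd z))) p) (a,b) = measure_pmf.prob p {y. fst y = a \<and> fst (snd y) = b}"
      by (simp add: pmf_map vimage_def)
    have e4: "pmf (map_pmf snd p) (b,c) = measure_pmf.prob p {y. snd y = (b,c)}"
      by (simp add: pmf_map vimage_def)
    show "pmf p (a, b, c) * pmf (map_pmf (\<lambda>z. fst (snd z)) p) b =
          pmf (map_pmf (\<lambda>z. (fst z, fst (snd z))) p) (a, b) * pmf (map_pmf snd p) (b, c)"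
    proof (cases "\<exists>x0\<in>set_pmf p. fst x0 = a \<and> fst (snd x0) = b")
      case True
      then obtain x0 where x0: "x0 \<in> set_pmf p" "fst x0 = a" "fst (snd x0) = b" by blast
      have Mab: "measure_pmf.prob p {y. fst y = a \<and> fst (snd y) = b} = measure_pmf.prob p {y. fst (snd y) = b}"
        using eqP[OF x0(1)] x0 unfolding Pab_def Pb_def PP_meas by simp
      have D1: "measure_pmf.prob p ({y. snd y = (b,c)} - {(a,b,c)}) =
          measure_pmf.prob p {y. snd y = (b,c)} - measure_pmf.prob p {(a,b,c)}"
        by (rule measure_pmf.finite_measure_Diff) auto
      have D2: "measure_pmf.prob p ({y. fst (snd y) = b} - {y. fst y = a \<and> fst (snd y) = b}) =
          measure_pmf.prob p {y. fst (snd y) = b} - measure_pmf.prob p {y. fst y = a \<and> fst (snd y) = b}"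
        by (rule measure_pmf.finite_measure_Diff) auto
      have "measure_pmf.prob p ({y. snd y = (b,c)} - {(a,b,c)}) \<le>
            measure_pmf.prob p ({y. fst (snd y) = b} - {y. fst y = a \<and> fst (snd y) = b})"
        by (rule measure_pmf.finite_measure_mono) auto
      moreover have "measure_pmf.prob p {(a,b,c)} \<le> measure_pmf.prob p {y. snd y = (b,c)}"
        by (rule measure_pmf.finite_measure_mono) auto
      ultimately have "measure_pmf.prob p {(a,b,c)} = measure_pmf.prob p {y. snd y = (b,c)}"
        using D1 D2 Mab by simp
      then show ?thesis using Mab unfolding e1 e2 e3 e4 by simp
    next
      case False
      have "measure_pmf.prob p {y. fst y = a \<and> fst (snd y) = b} = measure_pmf.prob p {}"
        using False by (intro meas_eq_set) auto
      moreover have "measure_pmf.prob p {(a,b,c)} = measure_pmf.prob p {}"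
        using False by (intro meas_eq_set) auto
      ultimately show ?thesis unfolding e1 e2 e3 e4 by simp
    qed
  qed
qed



definition S2 :: "('a \<times> 'b \<times> 'c) pmf \<Rightarrow> (nat \<times> 'a \<times> 'b \<times> 'c) pmf set" where
  "S2 p = {q :: (nat \<times> 'a \<times> 'b \<times> 'c) pmf.
        finite (set_pmf q) \<and> map_pmf snd q = p \<and>
        markov_pmf (map_pmf (\<lambda>(t, a, b, c). (t, a, c)) q) \<and>
        markov_pmf (map_pmf (\<lambda>(t, a, b, c). (t, b, c)) q)}"

definition v2 :: "(nat \<times> 'a \<times> 'b \<times> 'c) pmf \<Rightarrow> real" where
  "v2 q = mi_pmf (map_pmf (\<lambda>(t, a, b, c). (t, c)) q)"

lemma Icap2_eq: "Icap2 p = (SUP q\<in>S2 p. v2 q)"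
  unfolding Icap2_def S2_def v2_def ..

lemma bound2:
  assumes q: "q \<in> S2 p"
  shows "v2 q \<le> mi_pmf (map_pmf (\<lambda>(a, b, c). (a, c)) p)"
proof -
  have fin: "finite (set_pmf q)" and qp: "map_pmf snd q = p"
    and mk: "markov_pmf (map_pmf (\<lambda>(t, a, b, c). (t, a, c)) q)" using q unfolding S2_def by auto
  have f1: "(\<lambda>(t::nat, a::'a, b::'b, c::'c). (t, a, c)) = (\<lambda>x. (fst x, fst (snd x), snd (snd (snd x))))" by auto
  have f2: "(\<lambda>(t::nat, a::'a, b::'b, c::'c). (t, c)) = (\<lambda>x. (fst x, snd (snd (snd x))))" by auto
  have f3: "map_pmf (\<lambda>(a, b, c). (a, c)) p = map_pmf (\<lambda>x. (fst (snd x), snd (snd (snd x)))) q"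
    unfolding qp[symmetric] map_pmf_comp by (simp add: split_beta)
  show ?thesis unfolding v2_def f2 f3
    by (rule DPI[OF fin]) (use mk f1 in simp)
qed

lemma bdd2: "bdd_above (v2 ` S2 p)"
  using bound2 by (intro bdd_aboveI2) blast

lemma map_eqI: "(\<And>x. F (G x) = H x) \<Longrightarrow> map_pmf F (map_pmf G p) = map_pmf H p"
  by (simp add: map_pmf_comp)

lemma triv_in:
  assumes fin: "finite (set_pmf p)"
  shows "map_pmf (\<lambda>x. (0::nat, x)) p \<in> S2 p" and "v2 (map_pmf (\<lambda>x. (0::nat, x)) p) = 0"
proof -
  have m1: "map_pmf (\<lambda>(t, a, b, c). (t, a, c)) (map_pmf (\<lambda>x. (0::nat, x)) p) =
       map_pmf (\<lambda>x. ((\<lambda>_. 0::nat) (fst x), fst x, snd (snd x))) p"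
    by (rule map_eqI) (simp add: split_beta)
  have m2: "map_pmf (\<lambda>(t, a, b, c). (t, b, c)) (map_pmf (\<lambda>x. (0::nat, x)) p) =
       map_pmf (\<lambda>x. ((\<lambda>_. 0::nat) (fst (snd x)), fst (snd x), snd (snd x))) p"
    by (rule map_eqI) (simp add: split_beta)
  have m3: "map_pmf snd (map_pmf (\<lambda>x. (0::nat, x)) p) = p"
    by (simp add: map_pmf_comp map_pmf_ident)
  have fq: "finite (set_pmf (map_pmf (\<lambda>x. (0::nat, x)) p))" using fin by simp
  show "map_pmf (\<lambda>x. (0::nat, x)) p \<in> S2 p"
    unfolding S2_def mem_Collect_eq m1 m2 m3
    using fq markov_det[of "\<lambda>_. 0::nat" fst "\<lambda>x. snd (snd x)" p]
      markov_det[of "\<lambda>_. 0::nat" "\<lambda>x. fst (snd x)" "\<lambda>x. snd (snd x)" p] by simp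
  have m4: "map_pmf (\<lambda>(t, a, b, c). (t, c)) (map_pmf (\<lambda>x. (0::nat, x)) p) =
       map_pmf (\<lambda>x. (0::nat, snd (snd x))) p"
    by (rule map_eqI) (simp add: split_beta)
  show "v2 (map_pmf (\<lambda>x. (0::nat, x)) p) = 0"
    unfolding v2_def m4 by (rule mi_triv[OF fin])
qed

lemma S2_ne: "finite (set_pmf p) \<Longrightarrow> S2 p \<noteq> {}" using triv_in(1) by blast

lemma GP: "finite (set_pmf p) \<Longrightarrow> Icap2 p \<ge> 0"
  unfolding Icap2_eq by (rule cSUP_upper2[OF bdd2 triv_in(1)]) (simp_all add: triv_in(2))

lemma Mono: "finite (set_pmf p) \<Longrightarrow> Icap2 p \<le> mi_pmf (map_pmf (\<lambda>(a, b, c). (a, c)) p)"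
  unfolding Icap2_eq using S2_ne bound2 by (intro cSUP_least) auto

lemma swap_le:
  fixes p :: "('a \<times> 'b \<times> 'c) pmf"
  assumes fin: "finite (set_pmf p)"
  shows "Icap2 p \<le> Icap2 (map_pmf (\<lambda>(a, b, c). (b, a, c)) p)"
  unfolding Icap2_eq
proof (rule cSUP_mono[OF S2_ne[OF fin] bdd2])
  fix q assume q: "q \<in> S2 p"
  have fq: "finite (set_pmf q)" and qp: "map_pmf snd q = p"
    and mk1: "markov_pmf (map_pmf (\<lambda>(t, a, b, c). (t, a, c)) q)"
    and mk2: "markov_pmf (map_pmf (\<lambda>(t, a, b, c). (t, b, c)) q)" using q unfolding S2_def by auto
  let ?q' = "map_pmf (\<lambda>(t, a, b, c). (t, b, a, c)) q"
  have n1: "map_pmf snd ?q' = map_pmf (\<lambda>(a, b, c). (b, a, c)) p"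
    unfolding qp[symmetric] map_pmf_comp by (rule map_pmf_cong) (auto simp: split_beta)
  have n2: "map_pmf (\<lambda>(t, a, b, c). (t, a, c)) ?q' = map_pmf (\<lambda>(t, a, b, c). (t, b, c)) q"
    by (rule map_eqI) (simp add: split_beta)
  have n3: "map_pmf (\<lambda>(t, a, b, c). (t, b, c)) ?q' = map_pmf (\<lambda>(t, a, b, c). (t, a, c)) q"
    by (rule map_eqI) (simp add: split_beta)
  have n4: "map_pmf (\<lambda>(t, a, b, c). (t, c)) ?q' = map_pmf (\<lambda>(t, a, b, c). (t, c)) q"
    by (rule map_eqI) (simp add: split_beta)
  have "?q' \<in> S2 (map_pmf (\<lambda>(a, b, c). (b, a, c)) p)"
    unfolding S2_def mem_Collect_eq n1 n2 n3 using fq mk1 mk2 by simp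
  moreover have "v2 q \<le> v2 ?q'" unfolding v2_def n4 by simp
  ultimately show "\<exists>m\<in>S2 (map_pmf (\<lambda>(a, b, c). (b, a, c)) p). v2 q \<le> v2 m" by blast
qed

lemma swap_eq:
  fixes p :: "('a \<times> 'b \<times> 'c) pmf"
  assumes fin: "finite (set_pmf p)"
  shows "Icap2 p = Icap2 (map_pmf (\<lambda>(a, b, c). (b, a, c)) p)"
proof -
  have "map_pmf (\<lambda>(a, b, c). (b, a, c)) (map_pmf (\<lambda>(a, b, c). (b, a, c)) p) = map_pmf (\<lambda>x. x) p"
    by (rule map_eqI) (simp add: split_beta)
  then have e: "map_pmf (\<lambda>(a, b, c). (b, a, c)) (map_pmf (\<lambda>(a, b, c). (b, a, c)) p) = p"
    by (simp add: map_pmf_ident)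
  have "finite (set_pmf (map_pmf (\<lambda>(a, b, c). (b, a, c)) p))" using fin by simp
  from swap_le[OF this] have "Icap2 (map_pmf (\<lambda>(a, b, c). (b, a, c)) p) \<le> Icap2 p" unfolding e .
  with swap_le[OF fin] show ?thesis by simp
qed

lemma enc_ex: "finite A \<Longrightarrow> \<exists>e::'a \<Rightarrow> nat. inj_on e A"
  using finite_imp_inj_to_nat_seg by blast

lemma EQ:
  fixes p :: "('a \<times> 'b \<times> 'c) pmf"
  assumes fin: "finite (set_pmf p)" and mk: "markov_pmf p"
  shows "Icap2 p \<ge> mi_pmf (map_pmf (\<lambda>(a, b, c). (a, c)) p)"
proof -
  obtain e :: "'a \<Rightarrow> nat" where e: "inj_on e (fst ` set_pmf p)" using enc_ex[of "fst ` set_pmf p"] fin by auto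
  let ?q = "map_pmf (\<lambda>(a, b, c). (e a, a, b, c)) p"
  have m1: "map_pmf (\<lambda>(t, a, b, c). (t, a, c)) ?q = map_pmf (\<lambda>x. (e (fst x), fst x, snd (snd x))) p"
    by (rule map_eqI) (simp add: split_beta)
  have m2: "map_pmf (\<lambda>(t, a, b, c). (t, b, c)) ?q = map_pmf (\<lambda>(a, b, c). (e a, b, c)) p"
    by (rule map_eqI) (simp add: split_beta)
  have m3: "map_pmf snd ?q = p"
  proof -
    have "map_pmf snd ?q = map_pmf (\<lambda>x. x) p" by (rule map_eqI) (simp add: split_beta)
    then show ?thesis by (simp add: map_pmf_ident)
  qed
  have m4: "map_pmf (\<lambda>(t, a, b, c). (t, c)) ?q = map_pmf (\<lambda>x. (e (fst x), snd (snd x))) p"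
    by (rule map_eqI) (simp add: split_beta)
  have fq: "finite (set_pmf ?q)" using fin by simp
  have inS: "?q \<in> S2 p"
    unfolding S2_def mem_Collect_eq m1 m2 m3
    using fq markov_det[of e fst "\<lambda>x. snd (snd x)" p] markov_push[OF mk e] by simp
  have "v2 ?q = mi_pmf (map_pmf (\<lambda>x. (e (fst x), snd (snd x))) p)"
    unfolding v2_def m4 by (rule refl)
  also have "\<dots> = mi_pmf (map_pmf (\<lambda>x. (fst x, snd (snd x))) p)"
    by (rule mi_relabel[OF fin e])
  also have "map_pmf (\<lambda>x. (fst x, snd (snd x))) p = map_pmf (\<lambda>(a, b, c). (a, c)) p"
    by (rule map_pmf_cong) (auto simp: split_beta)
  finally have val: "v2 ?q = mi_pmf (map_pmf (\<lambda>(a, b, c). (a, c)) p)" .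
  show ?thesis unfolding Icap2_eq by (rule cSUP_upper2[OF bdd2 inS]) (simp only: val order_refl)
qed

lemma Icap1_mi:
  fixes p :: "('a \<times> 'c) pmf"
  assumes fin: "finite (set_pmf p)"
  shows "Icap1 p = mi_pmf p"
  unfolding Icap1_def
proof (rule cSup_eq_maximum)
  obtain e :: "'a \<Rightarrow> nat" where e: "inj_on e (fst ` set_pmf p)" using enc_ex[of "fst ` set_pmf p"] fin by auto
  let ?q = "map_pmf (\<lambda>x. (e (fst x), fst x, snd x)) p"
  have m3: "map_pmf snd ?q = p"
  proof -
    have "map_pmf snd ?q = map_pmf (\<lambda>x. x) p" by (rule map_eqI) (simp add: split_beta)
    then show ?thesis by (simp add: map_pmf_ident)
  qed
  have mem: "?q \<in> {q. finite (set_pmf q) \<and> map_pmf snd q = p \<and> markov_pmf q}"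
    unfolding mem_Collect_eq m3 using fin markov_det[of e fst snd p] by simp
  have val: "mi_pmf (map_pmf (\<lambda>(t, a, c). (t, c)) ?q) = mi_pmf p"
  proof -
    have "map_pmf (\<lambda>(t, a, c). (t, c)) ?q = map_pmf (\<lambda>x. (e (fst x), snd x)) p"
      by (rule map_eqI) (simp add: split_beta)
    then have "mi_pmf (map_pmf (\<lambda>(t, a, c). (t, c)) ?q) = mi_pmf (map_pmf (\<lambda>x. (e (fst x), snd x)) p)"
      by simp
    also have "\<dots> = mi_pmf (map_pmf (\<lambda>x. (fst x, snd x)) p)" by (rule mi_relabel[OF fin e])
    finally show ?thesis by (simp add: map_pmf_ident)
  qed
  show "mi_pmf p \<in> (\<lambda>q. mi_pmf (map_pmf (\<lambda>(t, a, c). (t, c)) q)) `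
      {q :: (nat \<times> 'a \<times> 'c) pmf. finite (set_pmf q) \<and> map_pmf snd q = p \<and> markov_pmf q}" 
    apply (rule image_eqI[where x="?q"])
    using val mem by simp_all
next
  fix y assume "y \<in> (\<lambda>q. mi_pmf (map_pmf (\<lambda>(t, a, c). (t, c)) q)) `
      {q :: (nat \<times> 'a \<times> 'c) pmf. finite (set_pmf q) \<and> map_pmf snd q = p \<and> markov_pmf q}"
  then obtain q :: "(nat \<times> 'a \<times> 'c) pmf" where y: "y = mi_pmf (map_pmf (\<lambda>(t, a, c). (t, c)) q)"
    and qS: "q \<in> {q :: (nat \<times> 'a \<times> 'c) pmf. finite (set_pmf q) \<and> map_pmf snd q = p \<and> markov_pmf q}"
    by (rule imageE)
  from qS have q: "finite (set_pmf q)" "map_pmf snd q = p" "markov_pmf q" by simp_all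
  have mk: "markov_pmf (map_pmf (\<lambda>x. (fst x, fst (snd x), snd (snd x))) q)"
    using q(3) by (simp add: map_pmf_ident)
  have "mi_pmf (map_pmf (\<lambda>x. (fst x, snd (snd x))) q) \<le> mi_pmf (map_pmf (\<lambda>x. (fst (snd x), snd (snd x))) q)"
    by (rule DPI[OF q(1) mk])
  moreover have "map_pmf (\<lambda>x. (fst (snd x), snd (snd x))) q = p"
  proof -
    have "map_pmf (\<lambda>x. x) (map_pmf snd q) = map_pmf (\<lambda>x. (fst (snd x), snd (snd x))) q"
      by (rule map_eqI) simp
    then show ?thesis using q(2) by (simp add: map_pmf_ident)
  qed
  moreover have "map_pmf (\<lambda>(t, a, c). (t, c)) q = map_pmf (\<lambda>x. (fst x, snd (snd x))) q"
    by (rule map_pmf_cong) (auto simp: split_beta)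
  ultimately show "y \<le> mi_pmf p" unfolding y by simp
qed



definition p2 :: "(nat \<times> nat) pmf" where "p2 = pmf_of_set {(0,0),(0,1),(1,1)}"

lemma set_p2: "set_pmf p2 = {(0,0),(0,1),(1,1)}" unfolding p2_def by (simp add: set_pmf_of_set)

lemma pmf_map_meas: "pmf (map_pmf F M) z = measure_pmf.prob M {y. F y = z}"
  by (simp add: pmf_map vimage_def)

lemma Z_term:
  fixes q :: "(nat \<times> nat \<times> nat \<times> 'c) pmf" and g :: "nat \<times> nat \<Rightarrow> 'c"
  assumes d1: "g (0,0) \<noteq> g (0,1)" and d2: "g (0,0) \<noteq> g (1,1)" and d3: "g (0,1) \<noteq> g (1,1)"
    and qp: "map_pmf snd q = map_pmf (\<lambda>(a, b). (a, b, g (a, b))) p2"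
    and mk1: "markov_pmf (map_pmf (\<lambda>(t, a, b, c). (t, a, c)) q)"
    and mk2: "markov_pmf (map_pmf (\<lambda>(t, a, b, c). (t, b, c)) q)"
    and x: "x \<in> set_pmf q"
  shows "PP q (\<lambda>x. (fst x, snd (snd (snd x)))) x = PP q fst x * PP q (\<lambda>x. snd (snd (snd x))) x"
proof -
  define y0 where "y0 = (0::nat, 0::nat, g (0,0))"
  define y1 where "y1 = (0::nat, 1::nat, g (0,1))"
  define y2 where "y2 = (1::nat, 1::nat, g (1,1))"
  have supp: "y \<in> set_pmf q \<Longrightarrow> snd y = y0 \<or> snd y = y1 \<or> snd y = y2" for y
  proof -
    assume "y \<in> set_pmf q"
    then have "snd y \<in> set_pmf (map_pmf snd q)" by simp
    then show ?thesis unfolding qp y0_def y1_def y2_def by (auto simp: set_p2)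
  qed
  have msnd: "measure_pmf.prob q {y. Q (snd y)} = card ({(0,0),(0,1),(1,1)} \<inter> {z. Q (fst z, snd z, g z)}) / 3" for Q
  proof -
    have "measure_pmf.prob q {y. Q (snd y)} = measure_pmf.prob (map_pmf snd q) {z. Q z}"
      by (simp add: vimage_def)
    also have "\<dots> = measure_pmf.prob p2 {z. Q (fst z, snd z, g z)}"
      unfolding qp by (simp add: vimage_def split_beta)
    also have "\<dots> = card ({(0,0),(0,1),(1,1)} \<inter> {z. Q (fst z, snd z, g z)}) / 3"
      unfolding p2_def by (subst measure_pmf_of_set) auto
    finally show ?thesis .
  qed
  define t where "t = fst x"
  define \<alpha> where "\<alpha> y = measure_pmf.prob q {z. fst z = t \<and> snd z = y}" for y
  have un: "measure_pmf.prob q {z. fst z = t \<and> (snd z = u \<or> snd z = v)} = \<alpha> u + \<alpha> v" if "u \<noteq> v" for u v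
  proof -
    have "{z. fst z = t \<and> (snd z = u \<or> snd z = v)} = {z. fst z = t \<and> snd z = u} \<union> {z. fst z = t \<and> snd z = v}" by auto
    then show ?thesis unfolding \<alpha>_def using that by (simp only:) (subst measure_pmf.finite_measure_Union, auto)
  qed
  have un3: "measure_pmf.prob q {z. fst z = t \<and> (snd z = y0 \<or> snd z = y1 \<or> snd z = y2)} = \<alpha> y0 + \<alpha> y1 + \<alpha> y2"
  proof -
    have "{z. fst z = t \<and> (snd z = y0 \<or> snd z = y1 \<or> snd z = y2)} = {z. fst z = t \<and> (snd z = y0 \<or> snd z = y1)} \<union> {z. fst z = t \<and> snd z = y2}" by auto
    moreover have "y0 \<noteq> y1" "y0 \<noteq> y2" "y1 \<noteq> y2" unfolding y0_def y1_def y2_def by auto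
    moreover have "measure_pmf.prob q ({z. fst z = t \<and> (snd z = y0 \<or> snd z = y1)} \<union> {z. fst z = t \<and> snd z = y2})
       = measure_pmf.prob q {z. fst z = t \<and> (snd z = y0 \<or> snd z = y1)} + measure_pmf.prob q {z. fst z = t \<and> snd z = y2}"
      using calculation by (subst measure_pmf.finite_measure_Union) auto
    ultimately show ?thesis using un[of y0 y1] unfolding \<alpha>_def by simp
  qed
  have a01: "\<alpha> y0 = \<alpha> y1"
  proof -
    have m: "pmf (map_pmf (\<lambda>(t, a, b, c). (t, a, c)) q) (t, 0, g (0,0)) *
               pmf (map_pmf (\<lambda>z. fst (snd z)) (map_pmf (\<lambda>(t, a, b, c). (t, a, c)) q)) 0 =
             pmf (map_pmf (\<lambda>z. (fst z, fst (snd z))) (map_pmf (\<lambda>(t, a, b, c). (t, a, c)) q)) (t, 0) *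
               pmf (map_pmf snd (map_pmf (\<lambda>(t, a, b, c). (t, a, c)) q)) (0, g (0,0))"
      using mk1 unfolding markov_alt by blast
    have e1: "pmf (map_pmf (\<lambda>(t, a, b, c). (t, a, c)) q) (t, 0, g (0,0)) = \<alpha> y0"
      unfolding pmf_map_meas \<alpha>_def
      by (rule meas_eq_set) (use supp d1 d2 d3 in \<open>force simp: y0_def y1_def y2_def split_beta\<close>)
    have e2: "pmf (map_pmf (\<lambda>z. fst (snd z)) (map_pmf (\<lambda>(t, a, b, c). (t, a, c)) q)) 0 = 2/3"
    proof -
      have "pmf (map_pmf (\<lambda>z. fst (snd z)) (map_pmf (\<lambda>(t, a, b, c). (t, a, c)) q)) 0
          = measure_pmf.prob q {y. (\<lambda>w. fst w = 0) (snd y)}"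
        unfolding map_pmf_comp pmf_map_meas by (simp add: split_beta)
      also have "\<dots> = 2/3" unfolding msnd[of "\<lambda>w. fst w = 0"] by simp
      finally show ?thesis .
    qed
    have e3: "pmf (map_pmf (\<lambda>z. (fst z, fst (snd z))) (map_pmf (\<lambda>(t, a, b, c). (t, a, c)) q)) (t, 0) = \<alpha> y0 + \<alpha> y1"
    proof -
      have "pmf (map_pmf (\<lambda>z. (fst z, fst (snd z))) (map_pmf (\<lambda>(t, a, b, c). (t, a, c)) q)) (t, 0)
          = measure_pmf.prob q {z. fst z = t \<and> (snd z = y0 \<or> snd z = y1)}"
        unfolding map_pmf_comp pmf_map_meas
        by (rule meas_eq_set) (use supp d1 d2 d3 in \<open>force simp: y0_def y1_def y2_def split_beta\<close>)
      also have "\<dots> = \<alpha> y0 + \<alpha> y1" by (rule un) (simp add: y0_def y1_def)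
      finally show ?thesis .
    qed
    have e4: "pmf (map_pmf snd (map_pmf (\<lambda>(t, a, b, c). (t, a, c)) q)) (0, g (0,0)) = 1/3"
    proof -
      have "pmf (map_pmf snd (map_pmf (\<lambda>(t, a, b, c). (t, a, c)) q)) (0, g (0,0))
          = measure_pmf.prob q {y. (\<lambda>w. fst w = 0 \<and> snd (snd w) = g (0,0)) (snd y)}"
        unfolding map_pmf_comp pmf_map_meas by (simp add: split_beta)
      also have "\<dots> = 1/3" unfolding msnd[of "\<lambda>w. fst w = 0 \<and> snd (snd w) = g (0,0)"] using d1 d2 d3 by simp
      finally show ?thesis .
    qed
    from m show ?thesis unfolding e1 e2 e3 e4 by simp
  qed
  have a12: "\<alpha> y1 = \<alpha> y2"
  proof -
    have m: "pmf (map_pmf (\<lambda>(t, a, b, c). (t, b, c)) q) (t, 1, g (0,1)) *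
               pmf (map_pmf (\<lambda>z. fst (snd z)) (map_pmf (\<lambda>(t, a, b, c). (t, b, c)) q)) 1 =
             pmf (map_pmf (\<lambda>z. (fst z, fst (snd z))) (map_pmf (\<lambda>(t, a, b, c). (t, b, c)) q)) (t, 1) *
               pmf (map_pmf snd (map_pmf (\<lambda>(t, a, b, c). (t, b, c)) q)) (1, g (0,1))"
      using mk2 unfolding markov_alt by blast
    have e1: "pmf (map_pmf (\<lambda>(t, a, b, c). (t, b, c)) q) (t, 1, g (0,1)) = \<alpha> y1"
      unfolding pmf_map_meas \<alpha>_def
      by (rule meas_eq_set) (use supp d1 d2 d3 in \<open>force simp: y0_def y1_def y2_def split_beta\<close>)
    have e2: "pmf (map_pmf (\<lambda>z. fst (snd z)) (map_pmf (\<lambda>(t, a, b, c). (t, b, c)) q)) 1 = 2/3"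
    proof -
      have "pmf (map_pmf (\<lambda>z. fst (snd z)) (map_pmf (\<lambda>(t, a, b, c). (t, b, c)) q)) 1
          = measure_pmf.prob q {y. (\<lambda>w. fst (snd w) = 1) (snd y)}"
        unfolding map_pmf_comp pmf_map_meas by (simp add: split_beta)
      also have "\<dots> = 2/3" unfolding msnd[of "\<lambda>w. fst (snd w) = 1"] by simp
      finally show ?thesis .
    qed
    have e3: "pmf (map_pmf (\<lambda>z. (fst z, fst (snd z))) (map_pmf (\<lambda>(t, a, b, c). (t, b, c)) q)) (t, 1) = \<alpha> y1 + \<alpha> y2"
    proof -
      have "pmf (map_pmf (\<lambda>z. (fst z, fst (snd z))) (map_pmf (\<lambda>(t, a, b, c). (t, b, c)) q)) (t, 1)
          = measure_pmf.prob q {z. fst z = t \<and> (snd z = y1 \<or> snd z = y2)}"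
        unfolding map_pmf_comp pmf_map_meas
        by (rule meas_eq_set) (use supp d1 d2 d3 in \<open>force simp: y0_def y1_def y2_def split_beta\<close>)
      also have "\<dots> = \<alpha> y1 + \<alpha> y2" by (rule un) (simp add: y1_def y2_def)
      finally show ?thesis .
    qed
    have e4: "pmf (map_pmf snd (map_pmf (\<lambda>(t, a, b, c). (t, b, c)) q)) (1, g (0,1)) = 1/3"
    proof -
      have "pmf (map_pmf snd (map_pmf (\<lambda>(t, a, b, c). (t, b, c)) q)) (1, g (0,1))
          = measure_pmf.prob q {y. (\<lambda>w. snd w = (1, g (0,1))) (snd y)}"
        unfolding map_pmf_comp pmf_map_meas by (simp add: split_beta)
      also have "\<dots> = 1/3" unfolding msnd[of "\<lambda>w. snd w = (1, g (0,1))"] using d1 d2 d3 by simp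
      finally show ?thesis .
    qed
    from m show ?thesis unfolding e1 e2 e3 e4 by simp
  qed
  have Pt: "PP q fst x = \<alpha> y0 + \<alpha> y1 + \<alpha> y2"
    unfolding PP_meas t_def[symmetric] un3[symmetric]
    by (rule meas_eq_set) (use supp in auto)
  have case3: "snd x = y0 \<or> snd x = y1 \<or> snd x = y2" using supp[OF x] .
  have Pc: "PP q (\<lambda>x. snd (snd (snd x))) x = 1/3"
  proof -
    have "PP q (\<lambda>x. snd (snd (snd x))) x = measure_pmf.prob q {y. (\<lambda>w. snd (snd w) = snd (snd (snd x))) (snd y)}"
      unfolding PP_meas by simp
    also have "\<dots> = 1/3" unfolding msnd[of "\<lambda>w. snd (snd w) = snd (snd (snd x))"] using case3 d1 d2 d3
      by (auto simp: y0_def y1_def y2_def)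
    finally show ?thesis .
  qed
  have Ptc: "PP q (\<lambda>x. (fst x, snd (snd (snd x)))) x = \<alpha> (snd x)"
    unfolding PP_meas \<alpha>_def t_def
    by (rule meas_eq_set) (use supp case3 d1 d2 d3 in \<open>force simp: y0_def y1_def y2_def\<close>)
  have "\<alpha> (snd x) = \<alpha> y0" using case3 a01 a12 by auto
  then show ?thesis unfolding Ptc Pt Pc using a01 a12 by simp
qed



lemma Zero:
  fixes g :: "nat \<times> nat \<Rightarrow> 'c"
  assumes d1: "g (0,0) \<noteq> g (0,1)" and d2: "g (0,0) \<noteq> g (1,1)" and d3: "g (0,1) \<noteq> g (1,1)"
  shows "Icap2 (map_pmf (\<lambda>(a, b). (a, b, g (a, b))) p2) \<le> 0"
  unfolding Icap2_eq
proof (rule cSUP_least)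
  show "S2 (map_pmf (\<lambda>(a, b). (a, b, g (a, b))) p2) \<noteq> {}" by (rule S2_ne) (simp add: set_p2)
next
  fix q assume q: "q \<in> S2 (map_pmf (\<lambda>(a, b). (a, b, g (a, b))) p2)"
  have fq: "finite (set_pmf q)" and qp: "map_pmf snd q = map_pmf (\<lambda>(a, b). (a, b, g (a, b))) p2"
    and mk1: "markov_pmf (map_pmf (\<lambda>(t, a, b, c). (t, a, c)) q)"
    and mk2: "markov_pmf (map_pmf (\<lambda>(t, a, b, c). (t, b, c)) q)" using q unfolding S2_def by auto
  have "map_pmf (\<lambda>(t, a, b, c). (t, c)) q = map_pmf (\<lambda>x. (fst x, snd (snd (snd x)))) q"
    by (rule map_pmf_cong) (auto simp: split_beta)
  then have "v2 q = mi_pmf (map_pmf (\<lambda>x. (fst x, snd (snd (snd x)))) q)" unfolding v2_def by simp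
  also have "\<dots> = 0" unfolding mi_pull[OF fq]
  proof (rule sum.neutral, intro ballI)
    fix x assume x: "x \<in> set_pmf q"
    have e: "PP q (\<lambda>x. (fst x, snd (snd (snd x)))) x = PP q fst x * PP q (\<lambda>x. snd (snd (snd x))) x"
      by (rule Z_term[OF d1 d2 d3 qp mk1 mk2 x])
    have "PP q fst x > 0" "PP q (\<lambda>x. snd (snd (snd x))) x > 0" using x by (auto intro: PP_pos)
    then show "pmf q x * log 2 (PP q (\<lambda>x. (fst x, snd (snd (snd x)))) x /
        (PP q (\<lambda>y. fst (fst y, snd (snd (snd y)))) x * PP q (\<lambda>y. snd (fst y, snd (snd (snd y)))) x)) = 0"
      unfolding e by simp
  qed
  finally show "v2 q \<le> 0" by simp
qed

lemma PP_p2: "PP p2 f x = card ({(0,0),(0,1),(1,1)} \<inter> {y. f y = f x}) / 3"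
  unfolding PP_meas p2_def by (subst measure_pmf_of_set) auto

lemma mi_p2: "mi_pmf (map_pmf F p2) = (\<Sum>x\<in>{(0,0),(0,1),(1,1)}. pmf p2 x *
     log 2 (PP p2 F x / (PP p2 (\<lambda>y. fst (F y)) x * PP p2 (\<lambda>y. snd (F y)) x)))"
  by (subst mi_pull) (auto simp: set_p2)

lemma pmf_p2: "x \<in> {(0,0),(0,1),(1,1)} \<Longrightarrow> pmf p2 x = 1/3"
  unfolding p2_def by auto

lemma L43: "log 2 3 > (4::real)/3"
proof -
  have "log 2 ((3::real)^3) = 3 * log 2 3" by (subst log_nat_power) auto
  moreover have "log 2 ((2::real)^4) = 4" by (subst log_nat_power) auto
  moreover have "log 2 ((2::real)^4) < log 2 ((3::real)^3)" by simp
  ultimately show ?thesis by simp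
qed

lemma l32: "log 2 (3/2::real) = log 2 3 - 1" by (simp add: log_divide)
lemma l34: "log 2 (3/4::real) = log 2 3 - 2"
proof -
  have "log 2 (4::real) = log 2 (2^2)" by simp
  also have "\<dots> = 2" by (subst log_nat_power) auto
  finally show ?thesis by (simp add: log_divide)
qed

lemma mi_p2_pos: "mi_pmf p2 > 0"
proof -
  have "mi_pmf p2 = 2 * log 2 (3 / 2) / 3 + log 2 (3 / 4) / 3"
    unfolding mi_self[of p2] mi_p2 by (simp add: PP_p2 pmf_p2)
  then show ?thesis using L43 unfolding l32 l34 by (simp add: field_simps)
qed

lemma SI2_neg: "SI2 (map_pmf (\<lambda>(a, b). (a, b, a + b)) p2) < 0"
proof -
  have I1: "mi_pmf (map_pmf (\<lambda>(a, b, c). ((a, b), c)) (map_pmf (\<lambda>(a, b). (a, b, a + b)) p2)) = log 2 3"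
    unfolding map_pmf_comp mi_p2 by (simp add: PP_p2 pmf_p2 split_beta)
  have I2: "mi_pmf (map_pmf (\<lambda>(a, b, c). (a, c)) (map_pmf (\<lambda>(a, b). (a, b, a + b)) p2)) = 2 * log 2 (3 / 2) / 3 + log 2 3 / 3"
    unfolding map_pmf_comp mi_p2 by (simp add: PP_p2 pmf_p2 split_beta)
  have I3: "mi_pmf (map_pmf (\<lambda>(a, b, c). (b, c)) (map_pmf (\<lambda>(a, b). (a, b, a + b)) p2)) = 2 * log 2 (3 / 2) / 3 + log 2 3 / 3"
    unfolding map_pmf_comp mi_p2 by (simp add: PP_p2 pmf_p2 split_beta)
  have Z: "Icap2 (map_pmf (\<lambda>(a, b). (a, b, a + b)) p2) \<le> 0"
    using Zero[of "\<lambda>(a, b). a + b"] by (simp add: split_beta)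
  show ?thesis unfolding SI2_def I1 I2 I3 l32 using Z L43 by (simp add: field_simps)
qed

lemma Id_fail: "Icap2 (map_pmf (\<lambda>(a, b). (a, b, (a, b))) p2) \<noteq> mi_pmf p2"
proof -
  have "Icap2 (map_pmf (\<lambda>(a, b). (a, b, (a, b))) p2) \<le> 0"
    using Zero[of "\<lambda>x. x"] by (simp add: split_beta)
  then show ?thesis using mi_p2_pos by simp
qed


theorem proposition1:
  shows
   "(\<forall>p :: ('a \<times> 'b \<times> 'c) pmf. finite (set_pmf p) \<longrightarrow>
       \<comment> \<open>(GP)\<close>
       Icap2 p \<ge> 0 \<and>
       \<comment> \<open>(S)\<close>
       Icap2 p = Icap2 (map_pmf (\<lambda>(a, b, c). (b, a, c)) p) \<and>
       \<comment> \<open>(M)\<close>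
       Icap2 p \<le> Icap1 (map_pmf (\<lambda>(a, b, c). (a, c)) p) \<and>
       (cond_entropy_pmf (map_pmf (\<lambda>(a, b, c). (a, b)) p) = 0 \<longrightarrow>
          Icap2 p = Icap1 (map_pmf (\<lambda>(a, b, c). (a, c)) p)) \<and>
       \<comment> \<open>(SM)\<close>
       (mi_pmf (map_pmf (\<lambda>(a, b, c). ((a, b), c)) p) = mi_pmf (map_pmf (\<lambda>(a, b, c). (b, c)) p) \<longrightarrow>
          Icap2 p = Icap1 (map_pmf (\<lambda>(a, b, c). (a, c)) p)))
    \<and> \<comment> \<open>(I)\<close>
    (\<forall>p :: ('a \<times> 'c) pmf. finite (set_pmf p) \<longrightarrow> Icap1 p = mi_pmf p)
    \<and> \<comment> \<open>not (LP)\<close>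
    (\<exists>p :: (nat \<times> nat \<times> nat) pmf. finite (set_pmf p) \<and> SI2 p < 0)
    \<and> \<comment> \<open>not (Id)\<close>
    (\<exists>p :: (nat \<times> nat) pmf. finite (set_pmf p) \<and>
       Icap2 (map_pmf (\<lambda>(a, b). (a, b, (a, b))) p) \<noteq> mi_pmf p)"
proof (intro conjI allI impI)
  fix p :: "('a \<times> 'b \<times> 'c) pmf"
  assume fin: "finite (set_pmf p)"
  have finac: "finite (set_pmf (map_pmf (\<lambda>(a, b, c). (a, c)) p))" using fin by simp
  note I1 = Icap1_mi[OF finac]
  show "Icap2 p \<ge> 0" by (rule GP[OF fin])
  show "Icap2 p = Icap2 (map_pmf (\<lambda>(a, b, c). (b, a, c)) p)" by (rule swap_eq[OF fin])
  show "Icap2 p \<le> Icap1 (map_pmf (\<lambda>(a, b, c). (a, c)) p)" unfolding I1 by (rule Mono[OF fin])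
  show "Icap2 p = Icap1 (map_pmf (\<lambda>(a, b, c). (a, c)) p)"
    if "cond_entropy_pmf (map_pmf (\<lambda>(a, b, c). (a, b)) p) = 0"
    unfolding I1 using Mono[OF fin] EQ[OF fin markov_from_H[OF fin that]] by linarith
  show "Icap2 p = Icap1 (map_pmf (\<lambda>(a, b, c). (a, c)) p)"
    if "mi_pmf (map_pmf (\<lambda>(a, b, c). ((a, b), c)) p) = mi_pmf (map_pmf (\<lambda>(a, b, c). (b, c)) p)"
    unfolding I1 using Mono[OF fin] EQ[OF fin markov_from_mi[OF fin that]] by linarith
next
  fix p :: "('a \<times> 'c) pmf"
  assume "finite (set_pmf p)"
  then show "Icap1 p = mi_pmf p" by (rule Icap1_mi)
next
  show "\<exists>p :: (nat \<times> nat \<times> nat) pmf. finite (set_pmf p) \<and> SI2 p < 0"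
    by (rule exI[of _ "map_pmf (\<lambda>(a, b). (a, b, a + b)) p2"]) (simp add: set_p2 SI2_neg)
next
  show "\<exists>p :: (nat \<times> nat) pmf. finite (set_pmf p) \<and>
       Icap2 (map_pmf (\<lambda>(a, b). (a, b, (a, b))) p) \<noteq> mi_pmf p"
    by (rule exI[of _ p2]) (simp add: set_p2 Id_fail)
qed

end
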